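(* Let $\mathcal{H}$ be a hypertree, $T$ a host tree of $\mathcal{H}$, and $uv$ an edge of $T$. Then $I_\mathcal{H}(uv)$ is a basic set of $\mathcal{H}$. Moreover, every basic set of $\mathcal{H}$ is of the form $I_\mathcal{H}(uv)$ for some edge $uv$ of $T$.
   Context: A hypergraph $\mathcal{H}$ has a finite vertex set $V(\mathcal{H})$ and a finite family of nonempty subsets (edges). A host tree of $\mathcal{H}$ is a tree with vertex set $V(\mathcal{H})$ in which every edge of $\mathcal{H}$ induces a connected subgraph; $\mathcal{H}$ is a hypertree if it has a host tree. For $V'\subseteq V(\mathcal{H})$, $I_\mathcal{H}(V')$ is the intersection of all edges of $\mathcal{H}$ containing $V'$, or $V(\mathcal{H})$ if none does; $I_\mathcal{H}(uv)=I_\mathcal{H}(\{u,v\})$. A union of sets is connected if the intersection graph of the sets is connected. The completion $Comp(\mathcal{H})$ is the hypergraph without repeated edges on $V(\mathcal{H})$ whose edges are $V(\mathcal{H})$, all one-element subsets, and all proper subsets of $V(\mathcal{H})$ obtainable from edges of $\mathcal{H}$ by repeated nonempty intersections and connected unions. A basic set of $\mathcal{H}$ is an edge of $Comp(\mathcal{H})$ with more than one vertex that cannot be expressed as a connected union of strictly smaller edges of $Comp(\mathcal{H})$. *)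

theory Defs
  imports Main
begin

text \<open>A hypergraph is given by a finite vertex set V and a finite family E of
nonempty subsets of V (repeated edges are irrelevant for all notions below).\<close>
definition hypergraph :: "'a set \<Rightarrow> 'a set set \<Rightarrow> bool" where
  "hypergraph V E \<longleftrightarrow> finite V \<and> finite E \<and> (\<forall>e\<in>E. e \<noteq> {} \<and> e \<subseteq> V)"

definition graph_on :: "'a set \<Rightarrow> 'a set set \<Rightarrow> bool" where
  "graph_on V T \<longleftrightarrow> (\<forall>e\<in>T. \<exists>x y. x \<noteq> y \<and> x \<in> V \<and> y \<in> V \<and> e = {x, y})"

definition connected_graph :: "'a set \<Rightarrow> 'a set set \<Rightarrow> bool" where
  "connected_graph S T \<longleftrightarrow>
     (\<forall>x\<in>S. \<forall>y\<in>S. (x, y) \<in> {(a, b). a \<in> S \<and> b \<in> S \<and> {a, b} \<in> T}\<^sup>*)"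

definition is_tree :: "'a set \<Rightarrow> 'a set set \<Rightarrow> bool" where
  "is_tree V T \<longleftrightarrow> graph_on V T \<and> connected_graph V T \<and>
     (\<forall>e\<in>T. \<not> connected_graph V (T - {e}))"

definition induced :: "'a set set \<Rightarrow> 'a set \<Rightarrow> 'a set set" where
  "induced T S = {e \<in> T. e \<subseteq> S}"

definition host_tree :: "'a set \<Rightarrow> 'a set set \<Rightarrow> 'a set set \<Rightarrow> bool" where
  "host_tree V E T \<longleftrightarrow> is_tree V T \<and> (\<forall>e\<in>E. connected_graph e (induced T e))"

definition hypertree :: "'a set \<Rightarrow> 'a set set \<Rightarrow> bool" where
  "hypertree V E \<longleftrightarrow> hypergraph V E \<and> (\<exists>T. host_tree V E T)"

definition I_H :: "'a set \<Rightarrow> 'a set set \<Rightarrow> 'a set \<Rightarrow> 'a set" where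
  "I_H V E V' = (if \<exists>e\<in>E. V' \<subseteq> e then \<Inter>{e \<in> E. V' \<subseteq> e} else V)"

definition connected_family :: "'a set set \<Rightarrow> bool" where
  "connected_family F \<longleftrightarrow> F \<noteq> {} \<and>
     (\<forall>A\<in>F. \<forall>B\<in>F. (A, B) \<in> {(X, Y). X \<in> F \<and> Y \<in> F \<and> X \<inter> Y \<noteq> {}}\<^sup>*)"

inductive_set gen_sets :: "'a set set \<Rightarrow> 'a set set" for E :: "'a set set" where
  base: "e \<in> E \<Longrightarrow> e \<in> gen_sets E"
| inter: "A \<in> gen_sets E \<Longrightarrow> B \<in> gen_sets E \<Longrightarrow> A \<inter> B \<noteq> {} \<Longrightarrow> A \<inter> B \<in> gen_sets E"
| union: "\<forall>A\<in>F. A \<in> gen_sets E \<Longrightarrow> finite F \<Longrightarrow> connected_family F \<Longrightarrow> \<Union>F \<in> gen_sets E"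

text \<open>Edges of the completion Comp(H) (as a set, so without repetitions).\<close>
definition Comp :: "'a set \<Rightarrow> 'a set set \<Rightarrow> 'a set set" where
  "Comp V E = {V} \<union> {{v} | v. v \<in> V} \<union> {S \<in> gen_sets E. S \<subset> V}"

definition basic_set :: "'a set \<Rightarrow> 'a set set \<Rightarrow> 'a set \<Rightarrow> bool" where
  "basic_set V E S \<longleftrightarrow> S \<in> Comp V E \<and> card S > 1 \<and>
     \<not> (\<exists>F. F \<subseteq> Comp V E \<and> connected_family F \<and> (\<forall>A\<in>F. A \<subset> S) \<and> \<Union>F = S)"

end

theory Submission
  imports Defs
begin

definition Rel :: "'a set \<Rightarrow> 'a set set \<Rightarrow> ('a \<times> 'a) set" where
  "Rel V T = {(a, b). a \<in> V \<and> b \<in> V \<and> {a, b} \<in> T}"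

definition side :: "'a set \<Rightarrow> 'a set set \<Rightarrow> 'a \<Rightarrow> 'a \<Rightarrow> 'a set" where
  "side V T u v = {x. (u, x) \<in> (Rel V (T - {{u, v}}))\<^sup>*}"

definition Qp :: "'a set \<Rightarrow> 'a set set \<Rightarrow> 'a set \<Rightarrow> bool" where
  "Qp V T A \<longleftrightarrow> (\<forall>u v. {u, v} \<in> T \<longrightarrow> v \<notin> A \<longrightarrow> A \<inter> side V T u v \<noteq> {} \<longrightarrow> A \<subseteq> side V T u v)"

lemma conn_Rel: "connected_graph S T \<longleftrightarrow> (\<forall>x\<in>S. \<forall>y\<in>S. (x, y) \<in> (Rel S T)\<^sup>*)"
  by (simp add: connected_graph_def Rel_def)

lemma Rel_sym: "(a, b) \<in> Rel V T \<Longrightarrow> (b, a) \<in> Rel V T"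
  by (auto simp: Rel_def insert_commute)

lemma Rel_rtrancl_sym: "(a, b) \<in> (Rel V T)\<^sup>* \<Longrightarrow> (b, a) \<in> (Rel V T)\<^sup>*"
  by (induction rule: rtrancl_induct) (auto intro: converse_rtrancl_into_rtrancl Rel_sym)

lemma F1:
  assumes "is_tree V T" "{u, v} \<in> T"
  shows "v \<notin> side V T u v"
proof
  assume "v \<in> side V T u v"
  hence uv: "(u, v) \<in> (Rel V (T - {{u, v}}))\<^sup>*" by (simp add: side_def)
  have "Rel V T \<subseteq> (Rel V (T - {{u, v}}))\<^sup>*"
  proof
    fix p assume "p \<in> Rel V T"
    then obtain a b where p: "p = (a, b)" "a \<in> V" "b \<in> V" "{a, b} \<in> T" by (auto simp: Rel_def)
    show "p \<in> (Rel V (T - {{u, v}}))\<^sup>*"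
    proof (cases "{a, b} = {u, v}")
      case True
      then have "(a = u \<and> b = v) \<or> (a = v \<and> b = u)" by (auto simp: doubleton_eq_iff)
      then show ?thesis using uv Rel_rtrancl_sym[OF uv] p by auto
    next
      case False then have "p \<in> Rel V (T - {{u, v}})" using p by (auto simp: Rel_def)
      then show ?thesis by auto
    qed
  qed
  hence "(Rel V T)\<^sup>* \<subseteq> (Rel V (T - {{u, v}}))\<^sup>*" by (rule rtrancl_subset_rtrancl)
  moreover have "connected_graph V T" using assms by (simp add: is_tree_def)
  ultimately have "connected_graph V (T - {{u, v}})" by (auto simp: conn_Rel)
  with assms show False by (auto simp: is_tree_def)
qed

lemma tree_edge:
  assumes "is_tree V T" "{u, v} \<in> T"
  shows "u \<noteq> v" "u \<in> V" "v \<in> V"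
proof -
  from assms obtain x y where "x \<noteq> y" "x \<in> V" "y \<in> V" "{u, v} = {x, y}"
    unfolding is_tree_def graph_on_def by blast
  then show "u \<noteq> v" "u \<in> V" "v \<in> V" by (auto simp: doubleton_eq_iff)
qed

lemma side_self: "u \<in> side V T u v" by (simp add: side_def)

lemma side_trans: "x \<in> side V T u v \<Longrightarrow> (x, y) \<in> (Rel V (T - {{u, v}}))\<^sup>* \<Longrightarrow> y \<in> side V T u v"
  by (auto simp: side_def)

lemma side_disj:
  assumes "is_tree V T" "{u, v} \<in> T"
  shows "side V T u v \<inter> side V T v u = {}"
proof (rule ccontr)
  assume "side V T u v \<inter> side V T v u \<noteq> {}"
  then obtain x where x1: "(u, x) \<in> (Rel V (T - {{u, v}}))\<^sup>*" and x2: "(v, x) \<in> (Rel V (T - {{u, v}}))\<^sup>*"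
    by (auto simp: side_def insert_commute)
  have "(u, v) \<in> (Rel V (T - {{u, v}}))\<^sup>*" using x1 Rel_rtrancl_sym[OF x2] by auto
  then have "v \<in> side V T u v" by (simp add: side_def)
  with F1[OF assms] show False by simp
qed

lemma Qp_base:
  assumes "e \<subseteq> V" "connected_graph e (induced T e)"
  shows "Qp V T e"
  unfolding Qp_def
proof (intro allI impI)
  fix u v assume uvT: "{u, v} \<in> T" and ve: "v \<notin> e" and ne: "e \<inter> side V T u v \<noteq> {}"
  then obtain x where x: "x \<in> e" "x \<in> side V T u v" by auto
  have sub: "Rel e (induced T e) \<subseteq> Rel V (T - {{u, v}})"
    using assms(1) ve by (auto simp: Rel_def induced_def) (metis doubleton_eq_iff)
  show "e \<subseteq> side V T u v"
  proof
    fix y assume "y \<in> e"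
    then have "(x, y) \<in> (Rel e (induced T e))\<^sup>*" using assms(2) x by (auto simp: conn_Rel)
    then have "(x, y) \<in> (Rel V (T - {{u, v}}))\<^sup>*" using rtrancl_mono[OF sub] by auto
    then show "y \<in> side V T u v" using side_trans x by metis
  qed
qed

lemma chain_prop:
  assumes "connected_family F" "A0 \<in> F" "P A0"
    "\<And>X Y. X \<in> F \<Longrightarrow> Y \<in> F \<Longrightarrow> X \<inter> Y \<noteq> {} \<Longrightarrow> P X \<Longrightarrow> P Y" "B \<in> F"
  shows "P B"
proof -
  have "(A0, B) \<in> {(X, Y). X \<in> F \<and> Y \<in> F \<and> X \<inter> Y \<noteq> {}}\<^sup>*"
    using assms(1,2,5) unfolding connected_family_def by blast
  then show ?thesis by (induction rule: rtrancl_induct) (use assms in auto)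
qed

lemma Qp_gen:
  assumes "hypergraph V E" "host_tree V E T"
  shows "A \<in> gen_sets E \<Longrightarrow> Qp V T A"
proof (induction rule: gen_sets.induct)
  case (base e)
  then show ?case using assms Qp_base[of e V T]
    by (auto simp: hypergraph_def host_tree_def)
next
  case (inter A B)
  then show ?case unfolding Qp_def by blast
next
  case (union F)
  show ?case unfolding Qp_def
  proof (intro allI impI)
    fix u v assume uvT: "{u, v} \<in> T" and ve: "v \<notin> \<Union>F" and ne: "\<Union>F \<inter> side V T u v \<noteq> {}"
    then obtain A0 x where A0: "A0 \<in> F" "x \<in> A0" "x \<in> side V T u v" by auto
    have Q: "\<And>A. A \<in> F \<Longrightarrow> Qp V T A" using union by auto
    have A0s: "A0 \<subseteq> side V T u v" using Q[OF A0(1)] A0 ve uvT unfolding Qp_def by blast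
    have "\<forall>B\<in>F. B \<subseteq> side V T u v"
    proof
      fix B assume "B \<in> F"
      show "B \<subseteq> side V T u v"
      proof (rule chain_prop[where P = "\<lambda>B. B \<subseteq> side V T u v", OF union(3) A0(1) A0s _ \<open>B \<in> F\<close>])
        fix X Y assume "X \<in> F" "Y \<in> F" "X \<inter> Y \<noteq> {}" "X \<subseteq> side V T u v"
        then have "Y \<inter> side V T u v \<noteq> {}" "v \<notin> Y" using ve by auto
        then show "Y \<subseteq> side V T u v" using Q[OF \<open>Y \<in> F\<close>] uvT unfolding Qp_def by blast
      qed
    qed
    then show "\<Union>F \<subseteq> side V T u v" by auto
  qed
qed

lemma Comp_sub: "hypergraph V E \<Longrightarrow> A \<in> Comp V E \<Longrightarrow> A \<subseteq> V"
  by (auto simp: Comp_def)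

lemma Qp_Comp:
  assumes "hypergraph V E" "host_tree V E T" "A \<in> Comp V E"
  shows "Qp V T A"
proof -
  have tr: "is_tree V T" using assms by (simp add: host_tree_def)
  consider "A = V" | w where "A = {w}" | "A \<in> gen_sets E"
    using assms(3) by (auto simp: Comp_def)
  then show ?thesis
  proof cases
    case 1 then show ?thesis using tree_edge[OF tr] unfolding Qp_def by blast
  next
    case 2 then show ?thesis unfolding Qp_def by blast
  next
    case 3 then show ?thesis using Qp_gen assms by blast
  qed
qed

lemma L:
  assumes tr: "is_tree V T" and uvT: "{u, v} \<in> T" and cf: "connected_family F"
    and Q: "\<forall>A\<in>F. Qp V T A" and u: "u \<in> \<Union>F" and v: "v \<in> \<Union>F"
  shows "\<exists>A\<in>F. u \<in> A \<and> v \<in> A"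
proof (rule ccontr)
  assume nb: "\<not> ?thesis"
  obtain A1 where A1: "A1 \<in> F" "u \<in> A1" using u by auto
  have vuT: "{v, u} \<in> T" using uvT by (simp add: insert_commute)
  have disj: "side V T u v \<inter> side V T v u = {}" by (rule side_disj[OF tr uvT])
  have A1s: "A1 \<subseteq> side V T u v"
    using Q A1 nb side_self[of u V T v] uvT unfolding Qp_def by blast
  have all: "\<forall>B\<in>F. B \<subseteq> side V T u v"
  proof
    fix B assume "B \<in> F"
    show "B \<subseteq> side V T u v"
    proof (rule chain_prop[where P = "\<lambda>B. B \<subseteq> side V T u v", OF cf A1(1) A1s _ \<open>B \<in> F\<close>])
      fix X Y assume XY: "X \<in> F" "Y \<in> F" "X \<inter> Y \<noteq> {}" "X \<subseteq> side V T u v"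
      show "Y \<subseteq> side V T u v"
      proof (cases "v \<in> Y")
        case False
        then have "Y \<inter> side V T u v \<noteq> {}" using XY by auto
        then show ?thesis using Q XY(2) False uvT unfolding Qp_def by blast
      next
        case True
        then have "u \<notin> Y" using nb XY(2) by auto
        then have "Y \<subseteq> side V T v u" using Q XY(2) True vuT side_self[of v V T u] unfolding Qp_def by blast
        then show ?thesis using XY disj by blast
      qed
    qed
  qed
  then have "v \<in> side V T u v" using v by auto
  with F1[OF tr uvT] show False by simp
qed

lemma I_base: "e \<in> E \<Longrightarrow> X \<subseteq> e \<Longrightarrow> I_H V E X \<subseteq> e"
  by (auto simp: I_H_def)

lemma R_gen:
  assumes hg: "hypergraph V E" and ht: "host_tree V E T"
  shows "A \<in> gen_sets E \<Longrightarrow> \<forall>u v. {u, v} \<in> T \<longrightarrow> u \<in> A \<longrightarrow> v \<in> A \<longrightarrow> I_H V E {u, v} \<subseteq> A"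
proof (induction rule: gen_sets.induct)
  case (base e)
  show ?case
  proof (intro allI impI)
    fix u v assume "{u, v} \<in> T" "u \<in> e" "v \<in> e"
    then show "I_H V E {u, v} \<subseteq> e" using I_base[of e E "{u, v}" V] base by simp
  qed
next
  case (inter A B)
  show ?case
  proof (intro allI impI)
    fix u v assume "{u, v} \<in> T" "u \<in> A \<inter> B" "v \<in> A \<inter> B"
    then have "I_H V E {u, v} \<subseteq> A" "I_H V E {u, v} \<subseteq> B" using inter.IH by simp_all
    then show "I_H V E {u, v} \<subseteq> A \<inter> B" by (rule Int_greatest)
  qed
next
  case (union F)
  show ?case
  proof (intro allI impI)
    fix u v assume uvT: "{u, v} \<in> T" and "u \<in> \<Union>F" "v \<in> \<Union>F"
    have tr: "is_tree V T" using ht by (simp add: host_tree_def)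
    have "\<forall>A\<in>F. Qp V T A" using union(1) Qp_gen[OF hg ht] by simp
    then have "\<exists>A\<in>F. u \<in> A \<and> v \<in> A"
      using L[OF tr uvT union(3)] \<open>u \<in> \<Union>F\<close> \<open>v \<in> \<Union>F\<close> by simp
    then obtain A where A: "A \<in> F" "u \<in> A" "v \<in> A" by blast
    then have "I_H V E {u, v} \<subseteq> A" using union(1) uvT by simp
    then show "I_H V E {u, v} \<subseteq> \<Union>F" using A(1) by blast
  qed
qed

lemma I_mem: "u \<in> V \<Longrightarrow> v \<in> V \<Longrightarrow> u \<in> I_H V E {u, v} \<and> v \<in> I_H V E {u, v}"
  by (auto simp: I_H_def)

lemma I_mem_T:
  assumes "is_tree V T" "{u, v} \<in> T"
  shows "u \<in> I_H V E {u, v} \<and> v \<in> I_H V E {u, v}"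
  using I_mem[OF tree_edge(2,3)[OF assms]] .

lemma I_sub_V:
  assumes "hypergraph V E"
  shows "I_H V E X \<subseteq> V"
proof (cases "\<exists>e\<in>E. X \<subseteq> e")
  case True
  then obtain e where e: "e \<in> E" "X \<subseteq> e" by blast
  have "I_H V E X \<subseteq> e" by (rule I_base[OF e])
  also have "e \<subseteq> V" using assms e(1) unfolding hypergraph_def by blast
  finally show ?thesis .
next
  case False
  then show ?thesis unfolding I_H_def by simp
qed

lemma Inter_gen:
  assumes "finite G" "G \<noteq> {}" "\<forall>e\<in>G. e \<in> gen_sets E \<and> u \<in> e"
  shows "\<Inter>G \<in> gen_sets E"
  using assms
proof (induction G rule: finite_ne_induct)
  case (singleton x)
  then show ?case by simp
next
  case (insert x G)
  have "x \<inter> \<Inter>G \<noteq> {}" using insert by blast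
  then show ?case using insert gen_sets.inter[of x E "\<Inter>G"] by simp
qed

lemma I_Comp:
  assumes hg: "hypergraph V E" and u: "u \<in> V"
  shows "I_H V E {u, v} \<in> Comp V E"
proof (cases "\<exists>e\<in>E. {u, v} \<subseteq> e")
  case False
  then have "I_H V E {u, v} = V" unfolding I_H_def by (rule if_not_P)
  then show ?thesis unfolding Comp_def by simp
next
  case True
  let ?G = "{e \<in> E. {u, v} \<subseteq> e}"
  have eq: "I_H V E {u, v} = \<Inter>?G" using True by (simp add: I_H_def)
  have "finite ?G" using hg by (auto simp: hypergraph_def)
  moreover have "?G \<noteq> {}" using True by auto
  moreover have "\<forall>e\<in>?G. e \<in> gen_sets E \<and> u \<in> e" by (auto intro: gen_sets.base)
  ultimately have "\<Inter>?G \<in> gen_sets E" by (rule Inter_gen)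
  then have g: "I_H V E {u, v} \<in> gen_sets E" using eq by simp
  have "I_H V E {u, v} \<subseteq> V" by (rule I_sub_V[OF hg])
  then show ?thesis using g unfolding Comp_def by blast
qed

lemma F2:
  assumes tr: "is_tree V T" and AV: "A \<subseteq> V" and Q: "Qp V T A" and x: "x \<in> A" and z: "z \<in> A"
  shows "(x, z) \<in> (Rel A (induced T A))\<^sup>*"
proof -
  let ?C = "{w. (x, w) \<in> (Rel A (induced T A))\<^sup>*}"
  have CA: "w \<in> A" if "w \<in> ?C" for w
  proof -
    have "(x, w) \<in> (Rel A (induced T A))\<^sup>*" using that by simp
    then show ?thesis by (induction rule: rtrancl_induct) (use x in \<open>auto simp: Rel_def\<close>)
  qed
  have "(x, z) \<in> (Rel V T)\<^sup>*" using tr x z AV by (auto simp: is_tree_def conn_Rel)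
  then have key: "z \<in> ?C \<or> (\<exists>a b. a \<in> ?C \<and> b \<notin> A \<and> {a, b} \<in> T \<and> (b, z) \<in> (Rel V (T - {{a, b}}))\<^sup>*)"
  proof (induction rule: rtrancl_induct)
    case base
    then show ?case by simp
  next
    case (step w w')
    then have ww: "w \<in> V" "w' \<in> V" "{w, w'} \<in> T" by (auto simp: Rel_def)
    from step.IH show ?case
    proof
      assume wC: "w \<in> ?C"
      show ?case
      proof (cases "w' \<in> A")
        case True
        then have "(w, w') \<in> Rel A (induced T A)" using CA[OF wC] ww by (auto simp: Rel_def induced_def)
        then have "w' \<in> ?C" using wC by (auto intro: rtrancl_into_rtrancl)
        then show ?thesis by simp
      next
        case False
        then show ?thesis using wC ww by blast
      qed
    next
      assume "\<exists>a b. a \<in> ?C \<and> b \<notin> A \<and> {a, b} \<in> T \<and> (b, w) \<in> (Rel V (T - {{a, b}}))\<^sup>*"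
      then obtain a b where ab: "a \<in> ?C" "b \<notin> A" "{a, b} \<in> T" "(b, w) \<in> (Rel V (T - {{a, b}}))\<^sup>*" by blast
      show ?case
      proof (cases "{w, w'} = {a, b}")
        case True
        then have "w' = a \<or> w' = b" by (auto simp: doubleton_eq_iff)
        then show ?thesis using ab by blast
      next
        case False
        then have "(w, w') \<in> Rel V (T - {{a, b}})" using ww by (auto simp: Rel_def)
        then have "(b, w') \<in> (Rel V (T - {{a, b}}))\<^sup>*" using ab(4) by (auto intro: rtrancl_into_rtrancl)
        then show ?thesis using ab by blast
      qed
    qed
  qed
  show ?thesis
  proof (rule ccontr)
    assume "\<not> ?thesis"
    with key obtain a b where ab: "a \<in> ?C" "b \<notin> A" "{a, b} \<in> T" "(b, z) \<in> (Rel V (T - {{a, b}}))\<^sup>*" by blast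
    have aA: "a \<in> A" using CA ab(1) by blast
    have "A \<subseteq> side V T a b" using Q ab aA side_self[of a V T b] unfolding Qp_def by blast
    then have "(a, z) \<in> (Rel V (T - {{a, b}}))\<^sup>*" using z by (auto simp: side_def)
    then have "(a, b) \<in> (Rel V (T - {{a, b}}))\<^sup>*" using Rel_rtrancl_sym[OF ab(4)] by auto
    then have "b \<in> side V T a b" by (simp add: side_def)
    with F1[OF tr ab(3)] show False by simp
  qed
qed

theorem mainTheorem4:
  fixes V :: "'a set" and E :: "'a set set" and T :: "'a set set"
  assumes "hypertree V E"
    and "host_tree V E T"
  shows "(\<forall>u v. {u, v} \<in> T \<longrightarrow> basic_set V E (I_H V E {u, v}))
       \<and> (\<forall>S. basic_set V E S \<longrightarrow> (\<exists>u v. {u, v} \<in> T \<and> S = I_H V E {u, v}))"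
proof -
  have hg: "hypergraph V E" using assms(1) by (simp add: hypertree_def)
  have ht: "host_tree V E T" by (rule assms(2))
  have tr: "is_tree V T" using ht by (simp add: host_tree_def)
  have finV: "finite V" using hg by (simp add: hypergraph_def)
  have part1: "basic_set V E (I_H V E {u, v})" if uvT: "{u, v} \<in> T" for u v
  proof -
    let ?S = "I_H V E {u, v}"
    note te = tree_edge[OF tr uvT]
    have SC: "?S \<in> Comp V E" using I_Comp[OF hg te(2)] .
    have uvS: "u \<in> ?S" "v \<in> ?S" using I_mem[OF te(2,3)] by auto
    have finS: "finite ?S" using finite_subset[OF I_sub_V[OF hg] finV] .
    have "card {u, v} \<le> card ?S" using uvS finS by (intro card_mono) auto
    then have card: "card ?S > 1" using te(1) by simp
    have "\<not> (\<exists>F. F \<subseteq> Comp V E \<and> connected_family F \<and> (\<forall>A\<in>F. A \<subset> ?S) \<and> \<Union>F = ?S)"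
    proof
      assume "\<exists>F. F \<subseteq> Comp V E \<and> connected_family F \<and> (\<forall>A\<in>F. A \<subset> ?S) \<and> \<Union>F = ?S"
      then obtain F where F: "F \<subseteq> Comp V E" "connected_family F" "\<forall>A\<in>F. A \<subset> ?S" "\<Union>F = ?S" by blast
      have "\<forall>A\<in>F. Qp V T A" using F(1) Qp_Comp[OF hg ht] by blast
      then obtain A where A: "A \<in> F" "u \<in> A" "v \<in> A" using L[OF tr uvT F(2)] uvS F(4) by blast
      have AS: "A \<subset> ?S" using F(3) A(1) by blast
      consider "A = V" | w where "A = {w}" | "A \<in> gen_sets E"
        using F(1) A(1) by (auto simp: Comp_def)
      then show False
      proof cases
        case 1 then show False using AS I_sub_V[OF hg] by blast
      next
        case 2 then show False using A te(1) by auto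
      next
        case 3 then show False using R_gen[OF hg ht 3] uvT A AS by blast
      qed
    qed
    then show ?thesis using SC card by (simp add: basic_set_def)
  qed
  have part2: "\<exists>u v. {u, v} \<in> T \<and> S = I_H V E {u, v}" if bs: "basic_set V E S" for S
  proof -
    have SC: "S \<in> Comp V E" and card: "card S > 1" using bs by (auto simp: basic_set_def)
    have SV: "S \<subseteq> V" using Comp_sub[OF hg SC] .
    have QS: "Qp V T S" using Qp_Comp[OF hg ht SC] .
    have two: "\<exists>w'\<in>S. w' \<noteq> w" if "w \<in> S" for w
    proof (rule ccontr)
      assume "\<not> ?thesis"
      then have "S \<subseteq> {w}" by blast
      then have "card S \<le> card {w}" by (intro card_mono) simp_all
      then show False using card by simp
    qed
    have nbr: "\<exists>y\<in>S. {w, y} \<in> T" if wS: "w \<in> S" for w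
    proof -
      obtain w' where w': "w' \<in> S" "w' \<noteq> w" using two[OF wS] by blast
      have "(w, w') \<in> (Rel S (induced T S))\<^sup>*" using F2[OF tr SV QS wS w'(1)] .
      then show ?thesis
      proof (cases rule: converse_rtranclE)
        case base then show ?thesis using w' by simp
      next
        case (step y)
        then show ?thesis by (auto simp: Rel_def induced_def)
      qed
    qed
    have Isub: "I_H V E {x, y} \<subseteq> S" if "{x, y} \<in> T" "x \<in> S" "y \<in> S" for x y
    proof -
      note te = tree_edge[OF tr that(1)]
      consider "S = V" | w where "S = {w}" | "S \<in> gen_sets E"
        using SC by (auto simp: Comp_def)
      then show ?thesis
      proof cases
        case 1 then show ?thesis using I_sub_V[OF hg] by simp
      next
        case 2 then show ?thesis using that te(1) by auto
      next
        case 3 then show ?thesis using R_gen[OF hg ht 3] that by blast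
      qed
    qed
    define F where "F = {I_H V E {x, y} | x y. {x, y} \<in> T \<and> x \<in> S \<and> y \<in> S}"
    have FC: "F \<subseteq> Comp V E"
      using I_Comp[OF hg] tree_edge[OF tr] unfolding F_def by blast
    have Fsub: "\<forall>A\<in>F. A \<subseteq> S" using Isub unfolding F_def by blast
    have FU: "\<Union>F = S"
    proof
      show "\<Union>F \<subseteq> S" using Fsub by blast
      show "S \<subseteq> \<Union>F"
      proof
        fix w assume wS: "w \<in> S"
        then obtain y where y: "y \<in> S" "{w, y} \<in> T" using nbr by blast
        have "w \<in> I_H V E {w, y}" using I_mem_T[OF tr y(2)] by simp
        moreover have "I_H V E {w, y} \<in> F" using y wS unfolding F_def by blast
        ultimately show "w \<in> \<Union>F" by blast
      qed
    qed
    obtain x0 where x0: "x0 \<in> S" using card by (metis all_not_in_conv card.empty not_less_zero)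
    have Fne: "F \<noteq> {}" using nbr[OF x0] x0 unfolding F_def by blast
    let ?RF = "{(X, Y). X \<in> F \<and> Y \<in> F \<and> X \<inter> Y \<noteq> {}}"
    have reach: "\<exists>y. y \<in> S \<and> {w, y} \<in> T \<and> (I_H V E {x1, y1}, I_H V E {w, y}) \<in> ?RF\<^sup>*"
      if e1: "{x1, y1} \<in> T" "x1 \<in> S" "y1 \<in> S" and p: "(x1, w) \<in> (Rel S (induced T S))\<^sup>*" for x1 y1 w
      using p
    proof (induction rule: rtrancl_induct)
      case base
      then show ?case using e1 by blast
    next
      case (step w w')
      then obtain y where y: "y \<in> S" "{w, y} \<in> T" "(I_H V E {x1, y1}, I_H V E {w, y}) \<in> ?RF\<^sup>*" by blast
      have ww: "w \<in> S" "w' \<in> S" "{w', w} \<in> T" using step(2)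
        by (auto simp: Rel_def induced_def insert_commute)
      have m1: "I_H V E {w, y} \<in> F" using y ww unfolding F_def by blast
      have m2: "I_H V E {w', w} \<in> F" using ww unfolding F_def by blast
      have "w \<in> I_H V E {w, y}" using I_mem_T[OF tr y(2)] by simp
      moreover have "w \<in> I_H V E {w', w}" using I_mem_T[OF tr ww(3)] by simp
      ultimately have "(I_H V E {w, y}, I_H V E {w', w}) \<in> ?RF" using m1 m2 by blast
      then show ?case using y ww by (blast intro: rtrancl_into_rtrancl)
    qed
    have cf: "connected_family F"
      unfolding connected_family_def
    proof (intro conjI Fne ballI)
      fix A B assume A: "A \<in> F" and B: "B \<in> F"
      obtain x1 y1 where e1: "A = I_H V E {x1, y1}" "{x1, y1} \<in> T" "x1 \<in> S" "y1 \<in> S"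
        using A unfolding F_def by blast
      obtain x2 y2 where e2: "B = I_H V E {x2, y2}" "{x2, y2} \<in> T" "x2 \<in> S" "y2 \<in> S"
        using B unfolding F_def by blast
      have "(x1, x2) \<in> (Rel S (induced T S))\<^sup>*" using F2[OF tr SV QS e1(3) e2(3)] .
      then obtain y where y: "y \<in> S" "{x2, y} \<in> T" "(A, I_H V E {x2, y}) \<in> ?RF\<^sup>*"
        using reach[OF e1(2,3,4)] e1(1) by blast
      have m: "I_H V E {x2, y} \<in> F" using y e2 unfolding F_def by blast
      have "x2 \<in> I_H V E {x2, y}" using I_mem_T[OF tr y(2)] by simp
      moreover have "x2 \<in> B" using I_mem_T[OF tr e2(2)] e2(1) by simp
      ultimately have "(I_H V E {x2, y}, B) \<in> ?RF" using m B by blast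
      then show "(A, B) \<in> ?RF\<^sup>*" using y(3) by (blast intro: rtrancl_into_rtrancl)
    qed
    have "\<not> (\<exists>F. F \<subseteq> Comp V E \<and> connected_family F \<and> (\<forall>A\<in>F. A \<subset> S) \<and> \<Union>F = S)"
      using bs by (simp add: basic_set_def)
    then obtain A where A: "A \<in> F" "\<not> A \<subset> S" using FC cf FU by blast
    then have "A = S" using Fsub by blast
    then show ?thesis using A(1) unfolding F_def by blast
  qed
  show ?thesis using part1 part2 by blast
qed

end
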